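(* Let $V\colon\mathbb{R}^2\to\mathbb{R}$ be continuous with $\inf_{\mathbb{R}^2}V>0$, and suppose that $H^1_V(\mathbb{R}^2)$ is continuously embedded in $L^\tau_V(\mathbb{R}^2)$ for some $\tau>2$. Assume that there exist $c_1>0$, $c_2>0$, $m>0$ and a sequence $\{x_n\}_n\subset\mathbb{R}^2$ with $|x_n|\to+\infty$ such that for every $n\ge1$, \[ c_1V(x_n)\le V(x)\le c_2V(x_n)\quad\text{for all }x\in B_{m/\sqrt{V(x_n)}}(x_n). \] Then $H^1_V(\mathbb{R}^2)$ is not compactly embedded in $L^\tau_V(\mathbb{R}^2)$.
   Context: $H^1_V(\mathbb{R}^2)$ is the completion of $C_0^\infty(\mathbb{R}^2)$ with respect to the norm $\|u\|_V=\left(\int_{\mathbb{R}^2}(|\nabla u|^2+V(x)|u|^2)\,dx\right)^{1/2}$. $L^\tau_V(\mathbb{R}^2)$ is the space of measurable $u$ with $\int_{\mathbb{R}^2}V(x)|u|^\tau dx<+\infty$, normed by $\left(\int V|u|^\tau\right)^{1/\tau}$. $B_r(x)$ is the open ball of radius $r$ centered at $x$. *)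

theory Defs
  imports "HOL-Analysis.Analysis"
begin

definition pd :: "2 \<Rightarrow> (real^2 \<Rightarrow> real) \<Rightarrow> real^2 \<Rightarrow> real" where
  "pd i f x = frechet_derivative f (at x) (axis i 1)"

definition smooth2 :: "(real^2 \<Rightarrow> real) \<Rightarrow> bool" where
  "smooth2 f \<longleftrightarrow> (\<forall>is :: 2 list. (foldr pd is f) differentiable_on UNIV)"

definition test_fun :: "(real^2 \<Rightarrow> real) \<Rightarrow> bool" where
  "test_fun f \<longleftrightarrow> smooth2 f \<and> compact (closure {x. f x \<noteq> 0})"

definition H1V_norm :: "(real^2 \<Rightarrow> real) \<Rightarrow> (real^2 \<Rightarrow> real) \<Rightarrow> real" where
  "H1V_norm V u = sqrt (\<integral>x. ((\<Sum>i\<in>UNIV. (pd i u x)\<^sup>2) + V x * (u x)\<^sup>2) \<partial>lborel)"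

definition LV_norm :: "(real^2 \<Rightarrow> real) \<Rightarrow> real \<Rightarrow> (real^2 \<Rightarrow> real) \<Rightarrow> real" where
  "LV_norm V \<tau> u = (\<integral>x. V x * \<bar>u x\<bar> powr \<tau> \<partial>lborel) powr (1 / \<tau>)"

text \<open>Continuous embedding H^1_V into L^tau_V: the inclusion is bounded on the dense
  subspace of test functions (equivalently, extends to a bounded operator).\<close>
definition cont_embedded :: "(real^2 \<Rightarrow> real) \<Rightarrow> real \<Rightarrow> bool" where
  "cont_embedded V \<tau> \<longleftrightarrow>
     (\<exists>C. \<forall>u. test_fun u \<longrightarrow> LV_norm V \<tau> u \<le> C * H1V_norm V u)"

text \<open>Compact embedding: (the continuous embedding maps) bounded sets to relatively compact
  sets; tested on H^1_V-bounded sequences of test functions, which must have a subsequence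
  that is Cauchy (hence convergent, L^tau_V being complete) in L^tau_V.\<close>
definition compactly_embedded :: "(real^2 \<Rightarrow> real) \<Rightarrow> real \<Rightarrow> bool" where
  "compactly_embedded V \<tau> \<longleftrightarrow> cont_embedded V \<tau> \<and>
     (\<forall>u :: nat \<Rightarrow> real^2 \<Rightarrow> real. (\<forall>n. test_fun (u n)) \<longrightarrow>
        (\<exists>B. \<forall>n. H1V_norm V (u n) \<le> B) \<longrightarrow>
        (\<exists>r :: nat \<Rightarrow> nat. strict_mono r \<and>
           (\<forall>e>0. \<exists>N. \<forall>m\<ge>N. \<forall>n\<ge>N. LV_norm V \<tau> (\<lambda>x. u (r m) x - u (r n) x) < e)))"

end

theory Submission
  imports Defs
begin

definition ee :: "nat \<Rightarrow> real \<Rightarrow> real" where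
  "ee n t = (if t > 0 then (1/t)^n * exp (-1/t) else 0)"

lemma ee_deriv_pos:
  assumes "t > 0"
  shows "(ee n has_real_derivative (- real n * ee (n+1) t + ee (n+2) t)) (at t)"
proof -
  have d: "((\<lambda>t. (1/t)^n * exp (-1/t)) has_real_derivative (- real n * ee (n+1) t + ee (n+2) t)) (at t)"
    using assms apply (auto intro!: derivative_eq_intros simp: ee_def)
    apply (cases n) apply (auto simp: field_simps)
    done
  show ?thesis
    apply (rule has_field_derivative_transform_within_open[OF d, of "{0<..}"])
    using assms by (auto simp: ee_def)
qed

lemma ee_deriv_neg:
  assumes "t < 0"
  shows "(ee n has_real_derivative (- real n * ee (n+1) t + ee (n+2) t)) (at t)"
proof -
  have d: "((\<lambda>t. 0) has_real_derivative 0) (at t)" by simp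
  have "(ee n has_real_derivative 0) (at t)"
    apply (rule has_field_derivative_transform_within_open[OF d, of "{..<0}"])
    using assms by (auto simp: ee_def)
  then show ?thesis using assms by (simp add: ee_def)
qed

lemma ee_deriv_0:
  "(ee n has_real_derivative (- real n * ee (n+1) 0 + ee (n+2) 0)) (at 0)"
proof -
  have L: "((\<lambda>y. (ee n y - ee n 0) / (y - 0)) \<longlongrightarrow> 0) (at_left 0)"
  proof (rule tendsto_eventually)
    show "\<forall>\<^sub>F y in at_left 0. (ee n y - ee n 0) / (y - 0) = (0::real)"
      using eventually_at_left_real[of "-1" "0::real"] by (rule eventually_mono) (auto simp: ee_def)
  qed
  have "((\<lambda>s. s ^ (n+1) / exp s) \<longlongrightarrow> (0::real)) at_top" by (rule tendsto_power_div_exp_0)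
  then have R0: "((\<lambda>y. (inverse y) ^ (n+1) / exp (inverse y)) \<longlongrightarrow> (0::real)) (at_right 0)"
    using filterlim_compose filterlim_inverse_at_top_right by blast
  have R: "((\<lambda>y. (ee n y - ee n 0) / (y - 0)) \<longlongrightarrow> 0) (at_right 0)"
  proof (rule tendsto_cong[THEN iffD1, OF _ R0])
    show "\<forall>\<^sub>F y in at_right 0. inverse y ^ (n + 1) / exp (inverse y) = (ee n y - ee n 0) / (y - 0)"
      using eventually_at_right_real[of "0::real" 1] by (rule eventually_mono)
         (auto simp: field_simps exp_minus ee_def)
  qed
  have "((\<lambda>y. (ee n y - ee n 0) / (y - 0)) \<longlongrightarrow> 0) (at 0)"
    using L R filterlim_at_split by blast
  then show ?thesis by (simp add: has_field_derivative_iff ee_def)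
qed

lemma ee_deriv: "(ee n has_real_derivative (- real n * ee (n+1) t + ee (n+2) t)) (at t)"
  using ee_deriv_pos ee_deriv_0 ee_deriv_neg by (cases t "0::real" rule: linorder_cases) auto

inductive smA :: "(real^2 \<Rightarrow> real) \<Rightarrow> bool" where
  smA_const: "smA (\<lambda>x. c)"
| smA_coord: "smA (\<lambda>x. x $ i)"
| smA_add: "smA f \<Longrightarrow> smA g \<Longrightarrow> smA (\<lambda>x. f x + g x)"
| smA_mult: "smA f \<Longrightarrow> smA g \<Longrightarrow> smA (\<lambda>x. f x * g x)"
| smA_ee: "smA f \<Longrightarrow> smA (\<lambda>x. ee n (f x))"

lemma smA_deriv:
  "smA f \<Longrightarrow> \<exists>f'. (\<forall>x. (f has_derivative f' x) (at x)) \<and> (\<forall>i. smA (\<lambda>x. f' x (axis i 1)))"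
proof (induction rule: smA.induct)
  case (smA_const c)
  show ?case by (intro exI[of _ "\<lambda>x h. 0"]) (auto intro: smA.intros)
next
  case (smA_coord j)
  show ?case
    apply (intro exI[of _ "\<lambda>x h. h $ j"])
    apply (auto intro!: bounded_linear.has_derivative[OF bounded_linear_vec_nth] has_derivative_ident smA.intros)
    done
next
  case (smA_add f g)
  then obtain f' g' where f: "\<forall>x. (f has_derivative f' x) (at x)" "\<forall>i. smA (\<lambda>x. f' x (axis i 1))"
    and g: "\<forall>x. (g has_derivative g' x) (at x)" "\<forall>i. smA (\<lambda>x. g' x (axis i 1))" by blast
  show ?case
    apply (intro exI[of _ "\<lambda>x h. f' x h + g' x h"])
    using f g by (auto intro!: has_derivative_add smA.intros)
next
  case (smA_mult f g)
  then obtain f' g' where f: "\<forall>x. (f has_derivative f' x) (at x)" "\<forall>i. smA (\<lambda>x. f' x (axis i 1))"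
    and g: "\<forall>x. (g has_derivative g' x) (at x)" "\<forall>i. smA (\<lambda>x. g' x (axis i 1))" by blast
  show ?case
    apply (intro exI[of _ "\<lambda>x h. f x * g' x h + f' x h * g x"])
    using f g smA_mult.hyps by (auto intro!: has_derivative_mult smA.intros)
next
  case (smA_ee f n)
  then obtain f' where f: "\<forall>x. (f has_derivative f' x) (at x)" "\<forall>i. smA (\<lambda>x. f' x (axis i 1))" by blast
  have e: "(ee n has_derivative (\<lambda>h. (- real n * ee (n+1) t + ee (n+2) t) * h)) (at t)" for t
    using ee_deriv[of n t] by (simp add: has_field_derivative_def)
  show ?case
  proof (intro exI[of _ "\<lambda>x h. (- real n * ee (n+1) (f x) + ee (n+2) (f x)) * f' x h"] conjI allI)
    fix x
    show "((\<lambda>x. ee n (f x)) has_derivative (\<lambda>h. (- real n * ee (n+1) (f x) + ee (n+2) (f x)) * f' x h)) (at x)"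
      by (rule has_derivative_compose[OF f(1)[rule_format] e])
  next
    fix i
    show "smA (\<lambda>x. (- real n * ee (n+1) (f x) + ee (n+2) (f x)) * f' x (axis i 1))"
      by (intro smA_mult smA_add smA_const smA.smA_ee[OF smA_ee.hyps] f(2)[rule_format])
  qed
qed

lemma smA_pd: "smA f \<Longrightarrow> smA (pd i f) \<and> f differentiable_on UNIV"
proof -
  assume "smA f"
  then obtain f' where f: "\<forall>x. (f has_derivative f' x) (at x)" "\<forall>i. smA (\<lambda>x. f' x (axis i 1))"
    using smA_deriv by blast
  have "pd i f = (\<lambda>x. f' x (axis i 1))"
    using f(1) frechet_derivative_at by (metis pd_def)
  then show ?thesis using f by (auto simp: differentiable_on_def differentiable_def)
qed

lemma smA_smooth: "smA f \<Longrightarrow> smooth2 f"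
proof -
  assume f: "smA f"
  have "smA (foldr pd is f)" for "is"
    by (induction "is") (use f smA_pd in auto)
  then show ?thesis unfolding smooth2_def using smA_pd by blast
qed


definition bmp :: "real^2 \<Rightarrow> real \<Rightarrow> real^2 \<Rightarrow> real" where
  "bmp c l x = ee 0 (1 - l^2 * norm (x - c)^2)"

lemma norm2_coords: "norm (y::real^2)^2 = y$1 * y$1 + y$2 * y$2"
  by (simp add: power2_norm_eq_inner inner_vec_def sum_2)

lemma smA_bmp: "smA (bmp c l)"
proof -
  have eq: "bmp c l = (\<lambda>x. ee 0 (1 + (-(l^2)) * ((x$1 + (-c$1)) * (x$1 + (-c$1)) + (x$2 + -c$2)*(x$2 + -c$2))))"
    (is "_ = ?R") by (simp add: fun_eq_iff bmp_def norm2_coords)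
  have "smA ?R"
    by (intro smA_mult smA_add smA_const smA_ee smA_coord)
  then show ?thesis by (subst eq)
qed

lemma bmp_ball: assumes "l > 0" shows "bmp c l x \<noteq> 0 \<longleftrightarrow> x \<in> ball c (1/l)"
proof -
  have "1 - l^2 * norm (x - c)^2 > 0 \<longleftrightarrow> (l * norm (x - c))^2 < 1^2"
    by (simp add: power_mult_distrib)
  also have "\<dots> \<longleftrightarrow> l * norm (x - c) < 1"
  proof
    assume "(l * norm (x - c))^2 < 1^2" then show "l * norm (x - c) < 1"
      by (rule power_less_imp_less_base) simp
  next
    assume "l * norm (x - c) < 1" then show "(l * norm (x - c))^2 < 1^2"
      using assms by (intro power_strict_mono) auto
  qed
  also have "\<dots> \<longleftrightarrow> x \<in> ball c (1/l)"
    using assms by (auto simp: dist_norm norm_minus_commute field_simps)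
  finally show ?thesis by (simp add: bmp_def ee_def)
qed

lemma test_bmp: assumes "l > 0" shows "test_fun (bmp c l)"
proof -
  have "{x. bmp c l x \<noteq> 0} \<subseteq> ball c (1/l)" using bmp_ball[OF assms] by auto
  then have "bounded {x. bmp c l x \<noteq> 0}" using bounded_ball bounded_subset by blast
  then show ?thesis unfolding test_fun_def using smA_smooth[OF smA_bmp] compact_closure by blast
qed

lemma bmp_range: "0 \<le> bmp c l x \<and> bmp c l x \<le> 1"
  by (auto simp: bmp_def ee_def)

lemma bmp_lower: assumes "l > 0" "x \<in> ball c (1/(2*l))" shows "exp (-4/3) \<le> bmp c l x"
proof -
  have d: "l * norm (x - c) < 1/2" using assms by (auto simp: dist_norm norm_minus_commute field_simps)
  have "(l * norm (x - c))^2 < (1/2)^2"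
    using d assms by (intro power_strict_mono) auto
  then have "l^2 * norm (x - c)^2 < 1/4" by (simp add: power_mult_distrib power_divide)
  then have g: "1 - l^2 * norm (x - c)^2 > 3/4" by linarith
  then have "1 / (1 - l^2 * norm (x - c)^2) < 4/3"
    by (simp add: field_simps)
  then show ?thesis using g by (auto simp: bmp_def ee_def)
qed

lemma ee2_bound: "0 \<le> ee 2 t \<and> ee 2 t \<le> 4"
proof (cases "t > 0")
  case True
  define s where "s = 1/t"
  have s: "s > 0" using True by (simp add: s_def)
  have "s/2 \<le> exp (s/2)" using exp_ge_add_one_self[of "s/2"] by linarith
  then have "(s/2)^2 \<le> exp (s/2) ^ 2" using s by (intro power_mono) auto
  also have "exp (s/2) ^ 2 = exp s" by (simp add: power2_eq_square exp_add[symmetric])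
  finally have "s^2 \<le> 4 * exp s" by (simp add: power_divide)
  then have "s^2 * exp (-s) \<le> 4" by (simp add: exp_minus field_simps)
  then show ?thesis using True by (simp add: ee_def s_def)
qed (simp add: ee_def)

lemma bmp_deriv:
  "(bmp c l has_derivative (\<lambda>h. ee 2 (1 - l^2 * norm (x - c)^2) * (-(l^2) * ((x - c) \<bullet> h + h \<bullet> (x - c))))) (at x)"
proof -
  have e: "(ee 0 has_derivative (\<lambda>h. ee 2 t * h)) (at t)" for t
    using ee_deriv[of 0 t] by (simp add: has_field_derivative_def numeral_2_eq_2)
  have g: "((\<lambda>x. 1 - l^2 * ((x - c) \<bullet> (x - c))) has_derivative (\<lambda>h. -(l^2) * ((x - c) \<bullet> h + h \<bullet> (x - c)))) (at x)"
    by (auto intro!: derivative_eq_intros)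
  have "bmp c l = (\<lambda>x. ee 0 (1 - l^2 * ((x - c) \<bullet> (x - c))))"
    by (simp add: fun_eq_iff bmp_def power2_norm_eq_inner)
  then show ?thesis
    using has_derivative_compose[OF g e] by (simp add: power2_norm_eq_inner)
qed

lemma abs_2: "\<bar>2 * a - 2 * b\<bar> = 2 * \<bar>a - b\<bar>" for a b :: real by (cases "a \<le> b") (simp_all add: abs_if)

lemma pd_bmp_bound:
  assumes "l > 0"
  shows "(pd i (bmp c l) x)^2 \<le> 64 * l^2 * indicator (ball c (1/l)) x"
proof -
  let ?g = "1 - l^2 * norm (x - c)^2"
  have "pd i (bmp c l) x = (\<lambda>h. ee 2 (1 - l^2 * norm (x - c)^2) * (-(l^2) * ((x - c) \<bullet> h + h \<bullet> (x - c)))) (axis i 1)"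
    unfolding pd_def frechet_derivative_at[OF bmp_deriv[of c l x], symmetric] by simp
  also have "\<dots> = ee 2 ?g * (-(l^2) * (2 * (x - c) $ i))"
    by (simp add: inner_axis inner_axis')
  finally have pd: "pd i (bmp c l) x = ee 2 ?g * (-(l^2) * (2 * (x - c) $ i))" .
  show ?thesis
  proof (cases "x \<in> ball c (1/l)")
    case True
    have n: "l * norm (x - c) < 1" using True assms by (auto simp: dist_norm norm_minus_commute field_simps)
    have "\<bar>pd i (bmp c l) x\<bar> = ee 2 ?g * (l^2 * 2 * \<bar>(x - c) $ i\<bar>)"
      using ee2_bound[of ?g] by (simp add: pd abs_mult abs_2)
    also have "\<dots> \<le> 4 * (l^2 * 2 * norm (x - c))"
      using ee2_bound[of ?g] component_le_norm_cart[of "x - c" i]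
      by (intro mult_mono) auto
    also have "\<dots> = 8 * l * (l * norm (x - c))" by (simp add: power2_eq_square)
    also have "\<dots> \<le> 8 * l" using n assms by simp
    finally have "\<bar>pd i (bmp c l) x\<bar> \<le> 8 * l" .
    then have "\<bar>pd i (bmp c l) x\<bar>^2 \<le> (8 * l)^2" by (intro power_mono) auto
    then show ?thesis using True by (simp add: power_mult_distrib)
  next
    case False
    then have "\<not> ?g > 0" using bmp_ball[OF assms, of c x] by (auto simp: bmp_def ee_def split: if_splits)
    then show ?thesis using False by (simp add: pd ee_def)
  qed
qed


lemma bmp_cont: "continuous_on UNIV (bmp c l)"
  by (rule has_derivative_continuous_on) (use bmp_deriv in blast)

lemma bmp_meas: "bmp c l \<in> borel_measurable lborel"
  using borel_measurable_continuous_onI[OF bmp_cont] by simp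

lemma int_ind: "integrable lborel (\<lambda>x::real^2. (C::real) * indicator (ball c r) x)"
proof -
  have "integrable lborel (indicator (ball c r) :: real^2 \<Rightarrow> real)"
    by (rule integrable_real_indicator) (simp, rule emeasure_lborel_ball_finite)
  then show ?thesis by (auto intro: integrable_mult_right)
qed

lemma int_ind_eq: "(\<integral>x. (C::real) * indicator (ball c r) x \<partial>lborel) = C * measure lborel (ball (c::real^2) r)"
  by simp

lemma H1_bound:
  fixes V :: "real^2 \<Rightarrow> real"
  assumes l: "l > 0" and V0: "\<forall>x. 0 \<le> V x" and c2: "c2 > 0"
    and Vb: "\<forall>x\<in>ball c (1/l). V x \<le> c2 * V c"
  shows "(\<integral>x. ((\<Sum>i\<in>UNIV. (pd i (bmp c l) x)\<^sup>2) + V x * (bmp c l x)\<^sup>2) \<partial>lborel)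
     \<le> (128 * l^2 + c2 * V c) * measure lborel (ball c (1/l))"
proof -
  have "(\<integral>x. ((\<Sum>i\<in>UNIV. (pd i (bmp c l) x)\<^sup>2) + V x * (bmp c l x)\<^sup>2) \<partial>lborel)
     \<le> (\<integral>x. (128 * l^2 + c2 * V c) * indicator (ball c (1/l)) x \<partial>lborel)"
  proof (rule integral_mono'[OF int_ind])
    fix x :: "real^2"
    have s: "(\<Sum>i\<in>UNIV. (pd i (bmp c l) x)\<^sup>2) \<le> 128 * l^2 * indicator (ball c (1/l)) x"
      using pd_bmp_bound[OF l, of 1 c x] pd_bmp_bound[OF l, of 2 c x] by (simp add: sum_2)
    have v: "V x * (bmp c l x)\<^sup>2 \<le> c2 * V c * indicator (ball c (1/l)) x"
    proof (cases "x \<in> ball c (1/l)")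
      case True
      have "(bmp c l x)\<^sup>2 \<le> 1" using bmp_range[of c l x] by (simp add: power_le_one)
      then have "V x * (bmp c l x)\<^sup>2 \<le> V x" using V0 by (simp add: mult_left_le)
      moreover have "V x \<le> c2 * V c" using Vb True by blast
      ultimately show ?thesis using True by simp
    next
      case False
      then show ?thesis using bmp_ball[OF l, of c x] by simp
    qed
    show "(\<Sum>i\<in>UNIV. (pd i (bmp c l) x)\<^sup>2) + V x * (bmp c l x)\<^sup>2
         \<le> (128 * l^2 + c2 * V c) * indicator (ball c (1/l)) x"
      using s v by (simp add: algebra_simps)
    show "0 \<le> (128 * l^2 + c2 * V c) * indicator (ball c (1/l)) x"
      using V0 c2 by (simp add: indicator_def)
  qed
  then show ?thesis by simp
qed

lemma LV_lower:
  fixes V :: "real^2 \<Rightarrow> real"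
  assumes la: "la > 0" and lb: "lb > 0" and disj: "ball ca (1/la) \<inter> ball cb (1/lb) = {}"
    and tau: "\<tau> > 0" and Vc: "continuous_on UNIV V" and V0: "\<forall>x. 0 \<le> V x"
    and c1: "c1 > 0" and c2: "c2 > 0"
    and Va: "\<forall>x\<in>ball ca (1/la). V x \<le> c2 * V ca"
    and Vb: "\<forall>x\<in>ball cb (1/lb). c1 * V cb \<le> V x \<and> V x \<le> c2 * V cb"
  shows "c1 * V cb * exp (-4/3) powr \<tau> * measure lborel (ball cb (1/(2*lb)))
     \<le> (\<integral>x. V x * \<bar>bmp ca la x - bmp cb lb x\<bar> powr \<tau> \<partial>lborel)"
proof -
  let ?G = "\<lambda>x. V x * \<bar>bmp ca la x - bmp cb lb x\<bar> powr \<tau>"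
  have Vm: "V \<in> borel_measurable lborel" using borel_measurable_continuous_onI[OF Vc] by simp
  have Gm: "?G \<in> borel_measurable lborel"
    using Vm bmp_meas[of ca la] bmp_meas[of cb lb] by measurable
  have Gi: "integrable lborel ?G"
  proof (rule Bochner_Integration.integrable_bound[OF _ Gm])
    show "integrable lborel (\<lambda>x. c2 * V ca * indicator (ball ca (1/la)) x + c2 * V cb * indicator (ball cb (1/lb)) x)"
      by (intro Bochner_Integration.integrable_add int_ind)
    show "AE x in lborel. norm (?G x) \<le> norm (c2 * V ca * indicator (ball ca (1/la)) x + c2 * V cb * indicator (ball cb (1/lb)) x)"
    proof (rule AE_I2)
      fix x
      have G0: "0 \<le> ?G x" using V0 by simp
      have a0: "0 \<le> c2 * V ca" "0 \<le> c2 * V cb" using V0 c2 by auto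
      have "?G x \<le> c2 * V ca * indicator (ball ca (1/la)) x + c2 * V cb * indicator (ball cb (1/lb)) x"
      proof (cases "x \<in> ball ca (1/la)")
        case True
        then have "x \<notin> ball cb (1/lb)" using disj by blast
        then have b0: "bmp cb lb x = 0" using bmp_ball[OF lb, of cb x] by simp
        have "\<bar>bmp ca la x - bmp cb lb x\<bar> powr \<tau> \<le> 1"
          using b0 bmp_range[of ca la x] tau by (intro powr_le1) auto
        then have "?G x \<le> V x" using V0 by (simp add: mult_left_le)
        moreover have "V x \<le> c2 * V ca" using Va True by blast
        ultimately show ?thesis using True \<open>x \<notin> ball cb (1/lb)\<close> by simp
      next
        case False
        then have a00: "bmp ca la x = 0" using bmp_ball[OF la, of ca x] by simp
        show ?thesis
        proof (cases "x \<in> ball cb (1/lb)")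
          case True
          have "\<bar>bmp ca la x - bmp cb lb x\<bar> powr \<tau> \<le> 1"
            using a00 bmp_range[of cb lb x] tau by (intro powr_le1) auto
          then have "?G x \<le> V x" using V0 by (simp add: mult_left_le)
          moreover have "V x \<le> c2 * V cb" using Vb True by blast
          ultimately show ?thesis using True False by simp
        next
          case F2: False
          then have "bmp cb lb x = 0" using bmp_ball[OF lb, of cb x] by simp
          then show ?thesis using a00 False F2 by simp
        qed
      qed
      then show "norm (?G x) \<le> norm (c2 * V ca * indicator (ball ca (1/la)) x + c2 * V cb * indicator (ball cb (1/lb)) x)"
        using G0 a0 by (simp add: indicator_def)
    qed
  qed
  have "(\<integral>x. (c1 * V cb * exp (-4/3) powr \<tau>) * indicator (ball cb (1/(2*lb))) x \<partial>lborel) \<le> (\<integral>x. ?G x \<partial>lborel)"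
  proof (rule integral_mono'[OF Gi])
    fix x
    show "0 \<le> ?G x" using V0 by simp
    show "c1 * V cb * exp (-4/3) powr \<tau> * indicator (ball cb (1/(2*lb))) x \<le> ?G x"
    proof (cases "x \<in> ball cb (1/(2*lb))")
      case True
      have "1/(2*lb) \<le> 1/lb" using lb by (simp add: field_simps)
      then have xb: "x \<in> ball cb (1/lb)" using True by auto
      then have "x \<notin> ball ca (1/la)" using disj by blast
      then have a00: "bmp ca la x = 0" using bmp_ball[OF la, of ca x] by simp
      have lo: "exp (-4/3) \<le> bmp cb lb x" using bmp_lower[OF lb True] .
      have "exp (-4/3) powr \<tau> \<le> \<bar>bmp ca la x - bmp cb lb x\<bar> powr \<tau>"
        using a00 lo tau by (intro powr_mono2) auto
      moreover have "c1 * V cb \<le> V x" using Vb xb by auto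
      moreover have "0 \<le> c1 * V cb" using c1 V0 by simp
      ultimately have "c1 * V cb * exp (-4/3) powr \<tau> \<le> ?G x"
        by (intro mult_mono) auto
      then show ?thesis using True by simp
    next
      case False
      then show ?thesis using V0 by simp
    qed
  qed
  then show ?thesis by simp
qed


theorem proposition2p7:
  fixes V :: "real^2 \<Rightarrow> real" and \<tau> :: real
  assumes "continuous_on UNIV V"
    and "\<exists>v0>0. \<forall>x. v0 \<le> V x"
    and "\<tau> > 2"
    and "cont_embedded V \<tau>"
    and "\<exists>c1>0. \<exists>c2>0. \<exists>m>0. \<exists>xs :: nat \<Rightarrow> real^2.
           filterlim (\<lambda>n. norm (xs n)) at_top sequentially \<and>
           (\<forall>n\<ge>1. \<forall>x\<in>ball (xs n) (m / sqrt (V (xs n))).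
              c1 * V (xs n) \<le> V x \<and> V x \<le> c2 * V (xs n))"
  shows "\<not> compactly_embedded V \<tau>"
proof
  assume CE: "compactly_embedded V \<tau>"
  from assms(2) obtain v0 where v0: "v0 > 0" "\<forall>x. v0 \<le> V x" by blast
  from assms(5) obtain c1 c2 m xs where c1: "c1 > 0" and c2: "c2 > 0" and m: "m > 0"
    and lim: "filterlim (\<lambda>n. norm (xs n)) at_top sequentially"
    and hyp: "\<forall>n\<ge>1. \<forall>x\<in>ball (xs n) (m / sqrt (V (xs n))). c1 * V (xs n) \<le> V x \<and> V x \<le> c2 * V (xs n)"
    by blast
  have tau: "\<tau> > 0" using assms(3) by simp
  have V0: "\<forall>x. 0 \<le> V x" using v0 by (meson order_trans less_imp_le)
  define c where "c n = xs (n+1)" for n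
  define l where "l n = sqrt (V (c n)) / m" for n
  define u where "u n = bmp (c n) (l n)" for n
  have Vpos: "V (c n) > 0" for n using v0 by (meson less_le_trans)
  have lpos: "l n > 0" for n using Vpos m by (simp add: l_def)
  have rinv: "1 / l n = m / sqrt (V (c n))" for n by (simp add: l_def)
  have hb: "\<forall>x\<in>ball (c n) (1 / l n). c1 * V (c n) \<le> V x \<and> V x \<le> c2 * V (c n)" for n
    unfolding rinv c_def using hyp by simp
  have l2: "(1 / l n) ^ 2 = m^2 / V (c n)" for n
    using Vpos[of n] by (simp add: rinv power_divide)
  define K where "K = measure lborel (ball (0::real^2) 1)"
  have K: "K > 0" using content_ball_pos[of 1 "0::real^2"] by (simp add: K_def)
  have Kb: "measure lborel (ball a r) = r^2 * K" if "r \<ge> 0" for a :: "real^2" and r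
    using content_ball_conv_unit_ball[OF that, of a] by (simp add: K_def)
  have bnd: "H1V_norm V (u n) \<le> sqrt ((128 + c2 * m^2) * K)" for n
  proof -
    have "(\<integral>x. ((\<Sum>i\<in>UNIV. (pd i (u n) x)\<^sup>2) + V x * (u n x)\<^sup>2) \<partial>lborel)
       \<le> (128 * (l n)^2 + c2 * V (c n)) * measure lborel (ball (c n) (1 / l n))"
      unfolding u_def using H1_bound[OF lpos V0 c2, of "c n"] hb by blast
    also have "\<dots> = (128 * (l n)^2 + c2 * V (c n)) * (1 / l n)^2 * K"
      using lpos[of n] by (simp add: Kb)
    also have "\<dots> = (128 + c2 * m^2) * K"
      unfolding l2 using Vpos[of n] lpos[of n] m by (simp add: l_def field_simps power_divide)
    finally show ?thesis unfolding H1V_norm_def by (rule real_sqrt_le_mono)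
  qed
  define R where "R = m / sqrt v0"
  have rR: "1 / l n \<le> R" for n
  proof -
    have "0 < sqrt (V (c n)) * sqrt v0" using Vpos[of n] v0 by simp
    then show ?thesis
      unfolding rinv R_def using v0 m v0(2)[rule_format, of "c n"] \<open>0 < sqrt (V (c n)) * sqrt v0\<close>
      by (auto intro!: divide_left_mono)
  qed
  have disj: "ball (c a) (1 / l a) \<inter> ball (c b) (1 / l b) = {}"
    if "norm (c b) + 2 * R \<le> norm (c a)" for a b
  proof (rule ccontr)
    assume "ball (c a) (1 / l a) \<inter> ball (c b) (1 / l b) \<noteq> {}"
    then obtain x where x: "dist (c a) x < 1 / l a" "dist (c b) x < 1 / l b" by auto
    have "dist (c a) (c b) \<le> dist (c a) x + dist x (c b)" by (rule dist_triangle)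
    also have "\<dots> < 2 * R" using x rR[of a] rR[of b] by (simp add: dist_commute)
    finally have "dist (c a) (c b) < 2 * R" .
    moreover have "norm (c a) \<le> norm (c b) + norm (c a - c b)" by (rule norm_triangle_sub)
    ultimately show False using that by (simp add: dist_norm)
  qed
  define \<delta> where "\<delta> = c1 * exp (-4/3) powr \<tau> * (m^2 / 4 * K)"
  have dpos: "\<delta> > 0" using c1 K m by (simp add: \<delta>_def)
  have low: "\<delta> powr (1/\<tau>) \<le> LV_norm V \<tau> (\<lambda>x. u a x - u b x)"
    if "ball (c a) (1 / l a) \<inter> ball (c b) (1 / l b) = {}" for a b
  proof -
    have "c1 * V (c b) * exp (-4/3) powr \<tau> * measure lborel (ball (c b) (1/(2 * l b)))
       \<le> (\<integral>x. V x * \<bar>u a x - u b x\<bar> powr \<tau> \<partial>lborel)"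
      unfolding u_def using LV_lower[OF lpos lpos that tau assms(1) V0 c1 c2] hb by blast
    moreover have "c1 * V (c b) * exp (-4/3) powr \<tau> * measure lborel (ball (c b) (1/(2 * l b))) = \<delta>"
    proof -
      have "(1 / (2 * l b))^2 = (1 / l b)^2 / 4" by (simp add: power_divide)
      have "measure lborel (ball (c b) (1/(2 * l b))) = (1/(2 * l b))^2 * K"
        by (rule Kb) (use lpos[of b] in simp)
      also have "\<dots> = m^2 / V (c b) / 4 * K"
        by (simp only: \<open>(1 / (2 * l b))^2 = (1 / l b)^2 / 4\<close> l2)
      finally have M: "measure lborel (ball (c b) (1/(2 * l b))) = m^2 / V (c b) / 4 * K" .
      have VV: "V (c b) * (m^2 / V (c b) / 4 * K) = m^2 / 4 * K"
        using Vpos[of b] by simp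
      have "c1 * V (c b) * exp (-4/3) powr \<tau> * measure lborel (ball (c b) (1/(2 * l b)))
          = c1 * exp (-4/3) powr \<tau> * (V (c b) * (m^2 / V (c b) / 4 * K))"
        unfolding M by (simp only: ac_simps)
      then show ?thesis unfolding VV \<delta>_def by simp
    qed
    ultimately have "\<delta> \<le> (\<integral>x. V x * \<bar>u a x - u b x\<bar> powr \<tau> \<partial>lborel)" by simp
    then show ?thesis unfolding LV_norm_def using dpos tau by (intro powr_mono2) auto
  qed
  have tf: "\<forall>n. test_fun (u n)" unfolding u_def using test_bmp lpos by blast
  have bex: "\<exists>B. \<forall>n. H1V_norm V (u n) \<le> B" using bnd by blast
  obtain r :: "nat \<Rightarrow> nat" where r: "strict_mono r"
    and cau: "\<forall>e>0. \<exists>N. \<forall>p\<ge>N. \<forall>q\<ge>N. LV_norm V \<tau> (\<lambda>x. u (r p) x - u (r q) x) < e"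
    using CE[unfolded compactly_embedded_def, THEN conjunct2, rule_format, OF tf[rule_format] bex] by blast
  have epos: "\<delta> powr (1/\<tau>) > 0" using dpos by simp
  obtain N :: nat where N: "\<forall>p\<ge>N. \<forall>q\<ge>N. LV_norm V \<tau> (\<lambda>x. u (r p) x - u (r q) x) < \<delta> powr (1/\<tau>)"
    using cau epos by blast
  have "strict_mono (\<lambda>n. r n + 1)" using r by (simp add: strict_mono_def)
  then have "filterlim (\<lambda>n. r n + 1) sequentially sequentially" by (rule filterlim_subseq)
  then have "filterlim (\<lambda>n. norm (xs (r n + 1))) at_top sequentially"
    using lim by (rule filterlim_compose[rotated])
  then have "eventually (\<lambda>n. norm (c (r N)) + 2 * R \<le> norm (c (r n))) sequentially"
    unfolding c_def filterlim_at_top by blast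
  then obtain M where M: "\<forall>n\<ge>M. norm (c (r N)) + 2 * R \<le> norm (c (r n))"
    unfolding eventually_sequentially by blast
  define n where "n = max M N"
  have "norm (c (r N)) + 2 * R \<le> norm (c (r n))" using M by (simp add: n_def)
  then have "\<delta> powr (1/\<tau>) \<le> LV_norm V \<tau> (\<lambda>x. u (r n) x - u (r N) x)"
    by (intro low disj)
  moreover have "LV_norm V \<tau> (\<lambda>x. u (r n) x - u (r N) x) < \<delta> powr (1/\<tau>)"
    using N by (simp add: n_def)
  ultimately show False by simp
qed

end
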